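(* Let $G\subset\mathrm{Homeo}_+([0,1])$ be a group without linked fixed points. Then the set of pairs of successive fixed points of elements of $G$ is at most countable.
   Context: For a group $G$ of homeomorphisms of $[0,1]$, a pair of successive fixed points of $G$ is a pair $\{a,b\}$, $a<b$, such that $(a,b)$ is a connected component of $[0,1]\setminus \mathrm{Fix}(g)$ for some $g\in G$. Two pairs $\{a,b\}$ and $\{c,d\}$ are linked if $(a,b)\cap\{c,d\}$ or $(c,d)\cap\{a,b\}$ consists of exactly one point. $G$ is without linked fixed points if no two pairs of successive fixed points of $G$ are linked. *)

theory Defs
  imports "HOL-Analysis.Analysis"
begin

text \<open>Orientation-preserving homeomorphisms of [0,1], represented as functions
  real \<Rightarrow> real that are the identity outside [0,1] (so that composition
  and inverse are literal function operations).\<close>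
definition homeo_plus :: "(real \<Rightarrow> real) \<Rightarrow> bool" where
  "homeo_plus f \<longleftrightarrow>
     (\<exists>g. homeomorphism {0..1} {0..1} f g) \<and> mono_on {0..1} f \<and>
     (\<forall>x. x \<notin> {0..1} \<longrightarrow> f x = x)"

definition homeo_plus_group :: "(real \<Rightarrow> real) set \<Rightarrow> bool" where
  "homeo_plus_group G \<longleftrightarrow>
     (\<forall>f\<in>G. homeo_plus f) \<and> id \<in> G \<and>
     (\<forall>f\<in>G. \<forall>g\<in>G. f \<circ> g \<in> G) \<and>
     (\<forall>f\<in>G. inv f \<in> G)"

definition Fix :: "(real \<Rightarrow> real) \<Rightarrow> real set" where
  "Fix g = {x \<in> {0..1}. g x = x}"

definition succ_fixed_pairs :: "(real \<Rightarrow> real) set \<Rightarrow> (real \<times> real) set" where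
  "succ_fixed_pairs G =
     {(a, b). a < b \<and> (\<exists>g\<in>G. {a<..<b} \<in> components ({0..1} - Fix g))}"

definition linked :: "real \<times> real \<Rightarrow> real \<times> real \<Rightarrow> bool" where
  "linked p q \<longleftrightarrow> (case p of (a, b) \<Rightarrow> case q of (c, d) \<Rightarrow>
      card ({a<..<b} \<inter> {c, d}) = 1 \<or> card ({c<..<d} \<inter> {a, b}) = 1)"

definition without_linked_fixed_points :: "(real \<Rightarrow> real) set \<Rightarrow> bool" where
  "without_linked_fixed_points G \<longleftrightarrow>
     (\<forall>p\<in>succ_fixed_pairs G. \<forall>q\<in>succ_fixed_pairs G. \<not> linked p q)"

end

theory Submission
  imports Defs
begin

lemma hp_cont: "homeo_plus f \<Longrightarrow> continuous_on {0..1} f"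
  unfolding homeo_plus_def homeomorphism_def by blast

lemma hp_maps: "homeo_plus f \<Longrightarrow> x \<in> {0..1} \<Longrightarrow> f x \<in> {0..1}"
  unfolding homeo_plus_def homeomorphism_def by blast

lemma hp_inj: assumes "homeo_plus f" shows "inj f"
proof (rule injI)
  fix x y assume e: "f x = f y"
  obtain g where h: "homeomorphism {0..1} {0..1} f g" and o: "\<forall>x. x \<notin> {0..1} \<longrightarrow> f x = x"
    using assms unfolding homeo_plus_def by blast
  from h have i: "\<And>x. x \<in> {0..1} \<Longrightarrow> g (f x) = x" and m: "\<And>x. x \<in> {0..1} \<Longrightarrow> f x \<in> {0..1}"
    unfolding homeomorphism_def by auto
  show "x = y"
  proof (cases "x \<in> {0..1}")
    case True
    show ?thesis
    proof (cases "y \<in> {0..1}")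
      case True
      have "x = g (f x)" using i[OF \<open>x \<in> {0..1}\<close>] by simp
      also have "\<dots> = g (f y)" using e by simp
      also have "\<dots> = y" using i[OF True] by simp
      finally show ?thesis .
    next
      case False
      then have "f y = y" using o by blast
      then show ?thesis using m[OF \<open>x \<in> {0..1}\<close>] e False by simp
    qed
  next
    case False
    then have fx: "f x = x" using o by blast
    show ?thesis
    proof (cases "y \<in> {0..1}")
      case True
      then show ?thesis using m[OF True] e False fx by simp
    next
      case False
      then show ?thesis using o fx e by simp
    qed
  qed
qed

lemma hp_surj: assumes "homeo_plus f" shows "surj f"
proof -
  obtain g where h: "homeomorphism {0..1} {0..1} f g" and o: "\<forall>x. x \<notin> {0..1} \<longrightarrow> f x = x"
    using assms unfolding homeo_plus_def by blast
  show ?thesis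
  proof (rule surjI[where g=f and f="\<lambda>y. if y \<in> {0..1} then g y else y"])
    fix y show "f (if y \<in> {0..1} then g y else y) = y"
    proof (cases "y \<in> {0..1}")
      case True then show ?thesis using h unfolding homeomorphism_def by auto
    next
      case False then show ?thesis using o by auto
    qed
  qed
qed

lemma hp_mono: "homeo_plus f \<Longrightarrow> x \<in> {0..1} \<Longrightarrow> y \<in> {0..1} \<Longrightarrow> x \<le> y \<Longrightarrow> f x \<le> f y"
  unfolding homeo_plus_def mono_on_def by blast

lemma hp_less: assumes "homeo_plus f" "x \<in> {0..1}" "y \<in> {0..1}" "x < y" shows "f x < f y"
proof -
  have "f x \<le> f y" using hp_mono[OF assms(1-3)] assms(4) by simp
  moreover have "f x \<noteq> f y" using hp_inj[OF assms(1)] assms(4) by (metis inj_eq less_irrefl)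
  ultimately show ?thesis by simp
qed

lemma comp_iff:
  assumes "c < d"
  shows "{c<..<d} \<in> components ({0..1} - Fix h) \<longleftrightarrow>
     {c<..<d} \<subseteq> {0..1} - Fix h \<and> c \<in> Fix h \<and> d \<in> Fix h" (is "?L \<longleftrightarrow> ?R")
proof
  assume L: ?L
  hence sub: "{c<..<d} \<subseteq> {0..1} - Fix h" and mx: "\<And>D. D \<noteq> {} \<Longrightarrow> {c<..<d} \<subseteq> D \<Longrightarrow> D \<subseteq> {0..1} - Fix h \<Longrightarrow> connected D \<Longrightarrow> D = {c<..<d}"
    unfolding in_components_maximal by blast+
  have c01: "c \<in> {0..1}"
  proof (rule ccontr)
    assume "c \<notin> {0..1}"
    hence "c < 0 \<or> c > 1" by auto
    then show False
    proof
      assume "c < 0"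
      hence "(c + min d 0)/2 \<in> {c<..<d}" "(c + min d 0)/2 \<notin> {0..1}" using assms by auto
      thus False using sub by blast
    next
      assume "c > 1"
      hence "(c + d)/2 \<in> {c<..<d}" "(c + d)/2 \<notin> {0..1}" using assms by auto
      thus False using sub by blast
    qed
  qed
  have d01: "d \<in> {0..1}"
  proof (rule ccontr)
    assume "d \<notin> {0..1}"
    hence "d < 0 \<or> d > 1" by auto
    then show False
    proof
      assume "d > 1"
      hence "(d + max c 1)/2 \<in> {c<..<d}" "(d + max c 1)/2 \<notin> {0..1}" using assms by auto
      thus False using sub by blast
    next
      assume "d < 0"
      hence "(c + d)/2 \<in> {c<..<d}" "(c + d)/2 \<notin> {0..1}" using assms by auto
      thus False using sub by blast
    qed
  qed
  have "c \<in> Fix h"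
  proof (rule ccontr)
    assume "c \<notin> Fix h"
    moreover have "{c..<d} = insert c {c<..<d}" using assms by auto
    ultimately have "{c..<d} \<subseteq> {0..1} - Fix h" using sub c01 by auto
    moreover have "connected {c..<d}" by simp
    ultimately have "{c..<d} = {c<..<d}" using mx[of "{c..<d}"] assms by fastforce
    thus False using assms by (metis atLeastLessThan_iff greaterThanLessThan_iff less_irrefl order_refl)
  qed
  moreover have "d \<in> Fix h"
  proof (rule ccontr)
    assume "d \<notin> Fix h"
    moreover have "{c<..d} = insert d {c<..<d}" using assms by auto
    ultimately have "{c<..d} \<subseteq> {0..1} - Fix h" using sub d01 by auto
    moreover have "connected {c<..d}" by simp
    ultimately have "{c<..d} = {c<..<d}" using mx[of "{c<..d}"] assms by fastforce
    thus False using assms by (metis greaterThanAtMost_iff greaterThanLessThan_iff less_irrefl order_refl)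
  qed
  ultimately show ?R using sub by blast
next
  assume R: ?R
  show ?L unfolding in_components_maximal
  proof (intro conjI allI impI)
    show "{c<..<d} \<noteq> {}" using assms by simp
    show "{c<..<d} \<subseteq> {0..1} - Fix h" using R by blast
    show "connected {c<..<d}" by simp
    fix D assume D: "D \<noteq> {} \<and> {c<..<d} \<subseteq> D \<and> D \<subseteq> {0..1} - Fix h \<and> connected D"
    have "D \<subseteq> {c<..<d}"
    proof
      fix y assume y: "y \<in> D"
      show "y \<in> {c<..<d}"
      proof (rule ccontr)
        assume n: "y \<notin> {c<..<d}"
        have "(c+d)/2 \<in> {c<..<d}" using assms by auto
        hence m: "(c+d)/2 \<in> D" using D by blast
        have "y \<le> c \<or> d \<le> y" using n by auto
        then show False
        proof
          assume "y \<le> c"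
          moreover have "c \<in> {y..(c+d)/2}" using assms \<open>y \<le> c\<close> by auto
          ultimately have "c \<in> D" using connected_contains_Icc[of D y "(c+d)/2"] D m y by blast
          thus False using D R by blast
        next
          assume "d \<le> y"
          moreover have "d \<in> {(c+d)/2..y}" using assms \<open>d \<le> y\<close> by auto
          ultimately have "d \<in> D" using connected_contains_Icc[of D "(c+d)/2" y] D m y by blast
          thus False using D R by blast
        qed
      qed
    qed
    thus "D = {c<..<d}" using D by blast
  qed
qed


lemma card_pair_one: "c \<noteq> d \<Longrightarrow> card (S \<inter> {c,d}) = 1 \<longleftrightarrow> ((c \<in> S) \<noteq> (d \<in> S))"
  by (cases "c \<in> S"; cases "d \<in> S") (auto simp: Int_insert_right)

lemma unlinked_cases:
  assumes "a < b" "c < d" "\<not> linked (a,b) (c,d)"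
  shows "(c \<in> {a<..<b}) = (d \<in> {a<..<b})" "(a \<in> {c<..<d}) = (b \<in> {c<..<d})"
  using assms card_pair_one[of c d "{a<..<b}"] card_pair_one[of a b "{c<..<d}"]
  unfolding linked_def by auto

lemma hp_fix: "homeo_plus f \<Longrightarrow> x \<notin> {0..1} \<Longrightarrow> f x = x"
  unfolding homeo_plus_def by blast

lemma key:
  assumes G: "homeo_plus_group G" and W: "without_linked_fixed_points G"
    and g: "g \<in> G" and ab: "{a<..<b} \<in> components ({0..1} - Fix g)" "a < b"
    and h: "h \<in> G" and cd: "{c<..<d} \<in> components ({0..1} - Fix h)" "c < d"
    and ac: "a < c" and db: "d < b"
  shows "d \<le> g c \<or> g d \<le> c"
proof -
  have hg: "homeo_plus g" and hh: "homeo_plus h" using G g h unfolding homeo_plus_group_def by auto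
  have sab: "{a<..<b} \<subseteq> {0..1} - Fix g" and aF: "a \<in> Fix g" and bF: "b \<in> Fix g"
    using comp_iff[OF ab(2)] ab(1) by auto
  have scd: "{c<..<d} \<subseteq> {0..1} - Fix h" and cF: "c \<in> Fix h" and dF: "d \<in> Fix h"
    using comp_iff[OF cd(2)] cd(1) by auto
  have a01: "a \<in> {0..1}" and b01: "b \<in> {0..1}" using aF bF unfolding Fix_def by auto
  have c01: "c \<in> {0..1}" and d01: "d \<in> {0..1}" using a01 b01 ac db cd(2) by auto
  have noF: "\<And>x. x \<in> {a<..<b} \<Longrightarrow> g x \<noteq> x" using sab unfolding Fix_def by auto
  have gcn: "g c \<noteq> c" and gdn: "g d \<noteq> d" using noF ac db cd(2) by auto
  have gcd: "g c < g d" using hp_less[OF hg c01 d01 cd(2)] .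
  have gc01: "g c \<in> {0..1}" and gd01: "g d \<in> {0..1}" using hp_maps[OF hg] c01 d01 by auto
  define k where "k = g \<circ> (h \<circ> inv g)"
  have kG: "k \<in> G" unfolding k_def using G g h unfolding homeo_plus_group_def by blast
  have ig: "\<And>x. inv g (g x) = x" using inv_f_f[OF hp_inj[OF hg]] by simp
  have gi: "\<And>y. g (inv g y) = y" using surj_f_inv_f[OF hp_surj[OF hg]] by simp
  have hc: "h c = c" and hd: "h d = d" using cF dF unfolding Fix_def by auto
  have kc: "g c \<in> Fix k" using gc01 hc ig unfolding Fix_def k_def by simp
  have kd: "g d \<in> Fix k" using gd01 hd ig unfolding Fix_def k_def by simp
  have ksub: "{g c<..<g d} \<subseteq> {0..1} - Fix k"
  proof
    fix y assume y: "y \<in> {g c<..<g d}"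
    hence y01: "y \<in> {0..1}" using gc01 gd01 by auto
    define z where "z = inv g y"
    have gz: "g z = y" unfolding z_def using gi by simp
    have z01: "z \<in> {0..1}"
    proof (rule ccontr)
      assume "z \<notin> {0..1}"
      hence "g z = z" using hp_fix[OF hg] by blast
      thus False using gz y01 \<open>z \<notin> {0..1}\<close> by simp
    qed
    have "c < z"
    proof (rule ccontr)
      assume "\<not> c < z" hence "g z \<le> g c" using hp_mono[OF hg z01 c01] by simp
      thus False using gz y by simp
    qed
    moreover have "z < d"
    proof (rule ccontr)
      assume "\<not> z < d" hence "g d \<le> g z" using hp_mono[OF hg d01 z01] by simp
      thus False using gz y by simp
    qed
    ultimately have "h z \<noteq> z" using scd unfolding Fix_def by auto
    hence "g (h z) \<noteq> g z" using hp_inj[OF hg] by (metis inj_eq)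
    hence "k y \<noteq> y" unfolding k_def using gz z_def by simp
    thus "y \<in> {0..1} - Fix k" using y01 unfolding Fix_def by simp
  qed
  have p1: "(c, d) \<in> succ_fixed_pairs G" using cd h unfolding succ_fixed_pairs_def by blast
  have p2: "(g c, g d) \<in> succ_fixed_pairs G"
    using comp_iff[OF gcd, of k] ksub kc kd kG gcd unfolding succ_fixed_pairs_def by blast
  have nl: "\<not> linked (c, d) (g c, g d)" using W p1 p2 unfolding without_linked_fixed_points_def by blast
  note u = unlinked_cases[OF cd(2) gcd nl]
  have cont: "continuous_on {c..d} g" using continuous_on_subset[OF hp_cont[OF hg]] c01 d01 by auto
  have n1: "\<not> (g c < c \<and> d < g d)"
  proof
    assume A: "g c < c \<and> d < g d"
    have "\<exists>x. c \<le> x \<and> x \<le> d \<and> (\<lambda>x. g x - x) x = 0"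
      by (rule IVT') (use A cd(2) in \<open>auto intro!: continuous_intros cont\<close>)
    then obtain x where "c \<le> x" "x \<le> d" "g x = x" by auto
    moreover have "x \<noteq> c" "x \<noteq> d" using gcn gdn \<open>g x = x\<close> by auto
    ultimately show False using noF[of x] ac db by auto
  qed
  have n2: "\<not> (c < g c \<and> g d < d)"
  proof
    assume A: "c < g c \<and> g d < d"
    have "\<exists>x. c \<le> x \<and> x \<le> d \<and> (\<lambda>x. x - g x) x = 0"
      by (rule IVT') (use A cd(2) in \<open>auto intro!: continuous_intros cont\<close>)
    then obtain x where "c \<le> x" "x \<le> d" "g x = x" by auto
    moreover have "x \<noteq> c" "x \<noteq> d" using gcn gdn \<open>g x = x\<close> by auto
    ultimately show False using noF[of x] ac db by auto
  qed
  have u1: "(c < g c \<and> g c < d) = (c < g d \<and> g d < d)" using u(1) by simp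
  show ?thesis
  proof (rule ccontr)
    assume "\<not> ?thesis"
    hence A: "g c < d" "c < g d" by auto
    show False
    proof (cases "c < g c")
      case True
      hence "g d < d" using u1 A by blast
      thus False using n2 True by blast
    next
      case False
      hence gc: "g c < c" using gcn by simp
      have "\<not> g d < d" using u1 A gc by auto
      hence "d < g d" using gdn by simp
      thus False using n1 gc by blast
    qed
  qed
qed


lemma key2:
  assumes G: "homeo_plus_group G" and W: "without_linked_fixed_points G"
    and g: "g \<in> G" and ab: "{a<..<b} \<in> components ({0..1} - Fix g)" "a < b"
    and q: "(c, d) \<in> succ_fixed_pairs G"
    and ac: "a < c" and db: "d < b" and cr: "c \<le> r" and sd: "s \<le> d"
    and x: "r < x" "x < s" "r < g x" "g x < s"
  shows False
proof -
  obtain h where h: "h \<in> G" and cd: "{c<..<d} \<in> components ({0..1} - Fix h)" and cdl: "c < d"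
    using q unfolding succ_fixed_pairs_def by blast
  have hg: "homeo_plus g" using G g unfolding homeo_plus_group_def by auto
  have "a \<in> Fix g" "b \<in> Fix g" using comp_iff[OF ab(2)] ab(1) by auto
  hence a01: "a \<in> {0..1}" and b01: "b \<in> {0..1}" unfolding Fix_def by auto
  have c01: "c \<in> {0..1}" and d01: "d \<in> {0..1}" and x01: "x \<in> {0..1}"
    using a01 b01 ac db cdl cr sd x by auto
  have "d \<le> g c \<or> g d \<le> c" using key[OF G W g ab h cd cdl ac db] .
  then show False
  proof
    assume "d \<le> g c"
    moreover have "g c < g x" using hp_less[OF hg c01 x01] cr x by simp
    ultimately show False using x sd by simp
  next
    assume "g d \<le> c"
    moreover have "g x < g d" using hp_less[OF hg x01 d01] sd x by simp
    ultimately show False using x cr by simp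
  qed
qed

lemma countable_subsingleton: "(\<And>x y. x \<in> A \<Longrightarrow> y \<in> A \<Longrightarrow> x = y) \<Longrightarrow> countable A"
proof (cases "A = {}")
  case False
  assume a: "\<And>x y. x \<in> A \<Longrightarrow> y \<in> A \<Longrightarrow> x = y"
  then obtain p where "p \<in> A" using False by blast
  hence "A \<subseteq> {p}" using a by blast
  thus ?thesis using countable_subset by blast
qed simp

theorem propositionp:
  fixes G :: "(real \<Rightarrow> real) set"
  assumes "homeo_plus_group G"
    and "without_linked_fixed_points G"
  shows "countable (succ_fixed_pairs G)"
proof -
  define Q where "Q = (\<lambda>(r::real, s::real). {p \<in> succ_fixed_pairs G. fst p < r \<and> s < snd p \<and>
      (\<exists>g\<in>G. {fst p<..<snd p} \<in> components ({0..1} - Fix g) \<and>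
        (\<exists>x. r < x \<and> x < s \<and> r < g x \<and> g x < s))})"
  have cover: "succ_fixed_pairs G \<subseteq> (\<Union>rs\<in>\<rat> \<times> \<rat>. Q rs)"
  proof
    fix p assume p: "p \<in> succ_fixed_pairs G"
    obtain a b where pab: "p = (a, b)" by (cases p)
    obtain g where ab: "a < b" and g: "g \<in> G" and comp: "{a<..<b} \<in> components ({0..1} - Fix g)"
      using p pab unfolding succ_fixed_pairs_def by blast
    have hg: "homeo_plus g" using assms(1) g unfolding homeo_plus_group_def by auto
    have sab: "{a<..<b} \<subseteq> {0..1} - Fix g" and aF: "a \<in> Fix g" and bF: "b \<in> Fix g"
      using comp_iff[OF ab] comp by auto
    hence a01: "a \<in> {0..1}" and b01: "b \<in> {0..1}" and ga: "g a = a" and gb: "g b = b"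
      unfolding Fix_def by auto
    define m where "m = (a + b) / 2"
    have m: "a < m" "m < b" using ab unfolding m_def by auto
    have m01: "m \<in> {0..1}" using m a01 b01 by auto
    have gm1: "a < g m" using hp_less[OF hg a01 m01 m(1)] ga by simp
    have gm2: "g m < b" using hp_less[OF hg m01 b01 m(2)] gb by simp
    obtain r where r: "r \<in> \<rat>" "a < r" "r < min m (g m)" using Rats_dense_in_real[of a "min m (g m)"] m gm1 by auto
    obtain s where s: "s \<in> \<rat>" "max m (g m) < s" "s < b" using Rats_dense_in_real[of "max m (g m)" b] m gm2 by auto
    have "p \<in> Q (r, s)" unfolding Q_def using p pab r s g comp
      by (auto intro!: bexI[of _ g] exI[of _ m])
    thus "p \<in> (\<Union>rs\<in>\<rat> \<times> \<rat>. Q rs)" using r s by blast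
  qed
  have sub: "countable (Q rs)" for rs
  proof -
    obtain r s where rs: "rs = (r, s)" by (cases rs)
    show ?thesis unfolding rs
    proof (rule countable_subsingleton)
      fix p q assume p: "p \<in> Q (r, s)" and q: "q \<in> Q (r, s)"
      obtain a b where pab: "p = (a, b)" by (cases p)
      obtain c d where qcd: "q = (c, d)" by (cases q)
      obtain g x where pP: "p \<in> succ_fixed_pairs G" and ar: "a < r" and sb: "s < b" and g: "g \<in> G"
        and gc: "{a<..<b} \<in> components ({0..1} - Fix g)"
        and x: "r < x" "x < s" "r < g x" "g x < s"
        using p pab unfolding Q_def by auto
      obtain h y where qP: "q \<in> succ_fixed_pairs G" and cr: "c < r" and sd: "s < d" and h: "h \<in> G"
        and hc: "{c<..<d} \<in> components ({0..1} - Fix h)"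
        and y: "r < y" "y < s" "r < h y" "h y < s"
        using q qcd unfolding Q_def by auto
      have ab: "a < b" and cd: "c < d" using ar sb cr sd x by auto
      show "p = q"
      proof (rule ccontr)
        assume ne: "p \<noteq> q"
        have nl: "\<not> linked (a, b) (c, d)" using assms(2) pP qP pab qcd
          unfolding without_linked_fixed_points_def by blast
        note u = unlinked_cases[OF ab cd nl]
        consider "a < c" | "c < a" | "a = c" by linarith
        then show False
        proof cases
          case 1
          hence db: "d < b" using u(1) cr sd ar sb x by auto
          have qq: "(c, d) \<in> succ_fixed_pairs G" using qP qcd by simp
          show False using key2[OF assms(1,2) g gc ab qq 1 db _ _ x] cr sd by simp
        next
          case 2
          hence bd: "b < d" using u(2) cr sd ar sb x by auto
          have pp: "(a, b) \<in> succ_fixed_pairs G" using pP pab by simp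
          show False using key2[OF assms(1,2) h hc cd pp 2 bd _ _ y] ar sb by simp
        next
          case 3
          hence "b \<noteq> d" using ne pab qcd by auto
          thus False using u 3 ab cd by (cases "b < d") auto
        qed
      qed
    qed
  qed
  have "countable (\<Union>rs\<in>\<rat> \<times> \<rat>. Q rs)"
    by (rule countable_UN[OF _ sub]) (simp add: countable_rat)
  thus ?thesis using cover countable_subset by blast
qed

end
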